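(* Suppose Assumptions A1, A2 and A3 hold, and let $\{w_k\}$ be generated by the subsampled Newton iteration $w_{k+1}=w_k-\nabla^2F_{S_k}(w_k)^{-1}\nabla F_{X_k}(w_k)$ (unit steplength). Then for each $k$, $$\mathbb{E}_k[\|w_{k+1}-w^*\|]\le\frac{1}{\mu_{|S_k|}}\left[\frac M2\|w_k-w^*\|^2+\mathbb{E}_k\big\|\big(\nabla^2F_{S_k}(w_k)-\nabla^2F(w_k)\big)(w_k-w^* )\big\|+\frac{v}{\sqrt{|X_k|}}\right],$$ where $\mathbb{E}_k$ denotes expectation over the random choice of $X_k$ and $S_k$ conditional on $w_k$.
   Context: Setting: $P$ is a probability distribution on input–output pairs $(x,y)$, $f(w;x,y)$ is a smooth loss, and $F(w)=\int f(w;x,y)\,dP(x,y)$ for $w\in\mathbb{R}^d$. Sample points $(x^i,y^i)$ are drawn independently from $P$, and $F_i(w)=f(w;x^i,y^i)$, so that $\mathbb{E}[\nabla F_i(w)]=\nabla F(w)$ and $\mathbb{E}[\nabla^2F_i(w)]=\nabla^2F(w)$. For a finite index set $S$, $\nabla F_S(w)=\frac1{|S|}\sum_{i\in S}\nabla F_i(w)$ and $\nabla^2F_S(w)=\frac1{|S|}\sum_{i\in S}\nabla^2F_i(w)$. The samples $X_k,S_k$ are index sets of independently drawn points, chosen independently of each other and of the past. $w^*$ is the unique minimizer of $F$. Assumption A1: $F$ is twice continuously differentiable; for every positive integer $\beta$ there are constants $0<\mu_\beta\le L_\beta$ such that for every $S$ with $|S|=\beta$, $\mu_\beta I\preceq\nabla^2F_S(w)\preceq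 L_\beta I$ for all $w$; $0<\bar\mu\le\mu_\beta$ and $L_\beta\le\bar L<\infty$ for all $\beta$; and $\mu I\preceq\nabla^2F(w)\preceq LI$ for all $w$. Assumption A2: $\operatorname{tr}(\operatorname{Cov}(\nabla F_i(w)))\le v^2$ for all $w$. Assumption A3: $\|\nabla^2F(w)-\nabla^2F(z)\|\le M\|w-z\|$ for all $w,z$. *)

theory Defs
  imports "HOL-Probability.Probability"
begin

definition psd :: "real^'n^'n \<Rightarrow> bool" where
  "psd A \<longleftrightarrow> (\<forall>u::real^'n. 0 \<le> u \<bullet> (A *v u))"

definition loewner_between :: "real \<Rightarrow> real^'n^'n \<Rightarrow> real \<Rightarrow> bool" where
  "loewner_between a A b \<longleftrightarrow> psd (A - a *\<^sub>R mat 1) \<and> psd (b *\<^sub>R mat 1 - A)"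

definition sub_grad :: "('z \<Rightarrow> real^'n \<Rightarrow> real^'n) \<Rightarrow> nat \<Rightarrow> (nat \<Rightarrow> 'z) \<Rightarrow> real^'n \<Rightarrow> real^'n" where
  "sub_grad g n xs w = (1 / real n) *\<^sub>R (\<Sum>i<n. g (xs i) w)"

definition sub_hess :: "('z \<Rightarrow> real^'n \<Rightarrow> real^'n^'n) \<Rightarrow> nat \<Rightarrow> (nat \<Rightarrow> 'z) \<Rightarrow> real^'n \<Rightarrow> real^'n^'n" where
  "sub_hess h n ss w = (1 / real n) *\<^sub>R (\<Sum>i<n. h (ss i) w)"

definition sn_step ::
  "('z \<Rightarrow> real^'n \<Rightarrow> real^'n) \<Rightarrow> ('z \<Rightarrow> real^'n \<Rightarrow> real^'n^'n) \<Rightarrow> nat \<Rightarrow> nat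
   \<Rightarrow> (nat \<Rightarrow> 'z) \<Rightarrow> (nat \<Rightarrow> 'z) \<Rightarrow> real^'n \<Rightarrow> real^'n" where
  "sn_step g h nX nS xs ss w = w - matrix_inv (sub_hess h nS ss w) *v sub_grad g nX xs w"

end

theory Submission
  imports Defs
begin
lemma loew_lower:
  fixes A :: "real^'n^'n"
  assumes "loewner_between a A b"
  shows "a * (u \<bullet> u) \<le> u \<bullet> (A *v u)"
proof -
  have "0 \<le> u \<bullet> ((A - a *\<^sub>R mat 1) *v u)" using assms by (simp add: loewner_between_def psd_def)
  also have "(A - a *\<^sub>R mat 1) *v u = A *v u - a *\<^sub>R u"
    by (simp add: matrix_vector_mult_diff_rdistrib flip: scaleR_matrix_vector_assoc)
  finally show ?thesis by (simp add: inner_diff_right)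
qed

lemma loew_norm:
  fixes A :: "real^'n^'n"
  assumes "loewner_between a A b"
  shows "a * norm u \<le> norm (A *v u)"
proof (cases "u = 0")
  case True then show ?thesis by simp
next
  case False
  have "a * (norm u * norm u) \<le> norm u * norm (A *v u)"
    using loew_lower[OF assms, of u] Cauchy_Schwarz_ineq2[of u "A *v u"]
    by (simp add: power2_norm_eq_inner[symmetric] power2_eq_square)
  then show ?thesis using False
    by (metis mult.assoc mult.commute mult_le_cancel_left_pos zero_less_norm_iff)
qed

lemma loew_inv:
  fixes A :: "real^'n^'n"
  assumes "loewner_between a A b" "0 < a"
  shows "A *v (matrix_inv A *v x) = x" "a * norm (matrix_inv A *v x) \<le> norm x"
proof -
  have "\<forall>u. A *v u = 0 \<longrightarrow> u = 0"
    using loew_norm[OF assms(1)] assms(2)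
    by (metis mult_le_0_iff norm_eq_zero norm_ge_zero norm_zero order_antisym linorder_not_le)
  then have "invertible A" using matrix_left_invertible_ker invertible_left_inverse by blast
  then have "A ** matrix_inv A = mat 1"
    unfolding invertible_def matrix_inv_def by (rule someI2_ex) auto
  then show 1: "A *v (matrix_inv A *v x) = x"
    by (metis matrix_vector_mul_assoc matrix_vector_mul_lid)
  show "a * norm (matrix_inv A *v x) \<le> norm x"
    using loew_norm[OF assms(1), of "matrix_inv A *v x"] 1 by simp
qed

lemma taylor_hess:
  fixes gradF :: "real^'n \<Rightarrow> real^'n" and hessF :: "real^'n \<Rightarrow> real^'n^'n"
  assumes F_hess: "\<And>w. (gradF has_derivative (\<lambda>h. hessF w *v h)) (at w)"
    and A3: "\<And>u y. onorm (\<lambda>x. (hessF u - hessF y) *v x) \<le> M * norm (u - y)"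
  shows "norm (gradF y - gradF x - hessF x *v (y - x)) \<le> M / 2 * (norm (y - x))\<^sup>2"
proof -
  define d where "d = y - x"
  define f where "f t = gradF (x + t *\<^sub>R d) - t *\<^sub>R (hessF x *v d)" for t :: real
  define f' where "f' t = hessF (x + t *\<^sub>R d) *v d - hessF x *v d" for t :: real
  define \<phi> where "\<phi> t = M / 2 * t\<^sup>2 * (norm d)\<^sup>2" for t :: real
  have fd: "(f has_vector_derivative f' t) (at t)" for t
  proof -
    have g: "((\<lambda>t. x + t *\<^sub>R d) has_derivative (\<lambda>h. h *\<^sub>R d)) (at t)"
      by (auto intro!: derivative_eq_intros)
    have "((\<lambda>t. gradF (x + t *\<^sub>R d)) has_derivative (\<lambda>h. hessF (x + t *\<^sub>R d) *v (h *\<^sub>R d))) (at t)"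
      using has_derivative_compose[OF g F_hess] by (simp add: o_def)
    then have "((\<lambda>t. gradF (x + t *\<^sub>R d)) has_vector_derivative (hessF (x + t *\<^sub>R d) *v d)) (at t)"
      by (simp add: has_vector_derivative_def matrix_vector_mult_scaleR)
    then show ?thesis unfolding f_def f'_def
      by (auto intro!: derivative_eq_intros)
  qed
  have pd: "(\<phi> has_vector_derivative (M * t * (norm d)\<^sup>2)) (at t)" for t
    unfolding \<phi>_def has_real_derivative_iff_has_vector_derivative[symmetric]
    by (auto intro!: derivative_eq_intros simp: power2_eq_square)
  have cf: "continuous_on {0..1} f"
    using fd by (meson continuous_at_imp_continuous_on has_vector_derivative_continuous)
  have cp: "continuous_on {0..1} \<phi>"
    using pd by (meson continuous_at_imp_continuous_on has_vector_derivative_continuous)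
  have bnd: "norm (f' t) \<le> M * t * (norm d)\<^sup>2" if "0 < t" for t
  proof -
    have "f' t = (hessF (x + t *\<^sub>R d) - hessF x) *v d"
      by (simp add: f'_def matrix_vector_mult_diff_rdistrib)
    then have "norm (f' t) \<le> onorm (\<lambda>v. (hessF (x + t *\<^sub>R d) - hessF x) *v v) * norm d"
      using onorm[OF matrix_vector_mul_bounded_linear] by simp
    also have "\<dots> \<le> M * norm (t *\<^sub>R d) * norm d"
      using A3[of "x + t *\<^sub>R d" x] by (simp add: mult_right_mono)
    also have "\<dots> = M * t * (norm d)\<^sup>2" using that by (simp add: power2_eq_square)
    finally show ?thesis .
  qed
  have "norm (f 1 - f 0) \<le> \<phi> 1 - \<phi> 0"
    by (rule differentiable_bound_general[OF zero_less_one cf cp fd pd]) (use bnd in auto)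
  then show ?thesis by (simp add: f_def \<phi>_def d_def algebra_simps)
qed

lemma prod_term:
  fixes P :: "'z measure" and a :: "'z \<Rightarrow> real" and n i k :: nat
  assumes P: "prob_space P" and ai: "integrable P a" and a2i: "integrable P (\<lambda>z. (a z)\<^sup>2)"
    and a0: "integral\<^sup>L P a = 0" and ik: "i < n" "k < n"
  shows "integrable (PiM {..<n} (\<lambda>_. P)) (\<lambda>x. a (x i) * a (x k))"
    "integral\<^sup>L (PiM {..<n} (\<lambda>_. P)) (\<lambda>x. a (x i) * a (x k)) = (if i = k then integral\<^sup>L P (\<lambda>z. (a z)\<^sup>2) else 0)"
proof -
  interpret P: prob_space P by fact
  interpret PS: product_sigma_finite "\<lambda>_. P" by standard
  define \<phi> where "\<phi> = (\<lambda>m z. (if m = i then a z else 1) * (if m = k then a z else 1))"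
  have eq: "(\<Prod>m\<in>{..<n}. \<phi> m (x m)) = a (x i) * a (x k)" for x
  proof -
    have "(\<Prod>m\<in>{..<n}. \<phi> m (x m)) = (\<Prod>m<n. if m = i then a (x m) else 1) * (\<Prod>m<n. if m = k then a (x m) else 1)"
      by (simp add: \<phi>_def prod.distrib)
    also have "\<dots> = a (x i) * a (x k)" 
    proof -
      have "(\<Prod>m<n. if m = j then a (x m) else 1) = a (x j)" if "j < n" for j
        using that by (subst prod.delta) auto
      then show ?thesis using ik by simp
    qed
    finally show ?thesis .
  qed
  have phii: "integrable P (\<phi> m)" for m
    using ai a2i by (cases "m = i"; cases "m = k") (auto simp: \<phi>_def power2_eq_square)
  have phiint: "integral\<^sup>L P (\<phi> m) = (if m = i \<and> m = k then integral\<^sup>L P (\<lambda>z. (a z)\<^sup>2) else if m = i \<or> m = k then 0 else 1)" for m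
    using a0 by (cases "m = i"; cases "m = k") (auto simp: \<phi>_def power2_eq_square P.prob_space)
  show "integrable (PiM {..<n} (\<lambda>_. P)) (\<lambda>x. a (x i) * a (x k))"
    using PS.product_integrable_prod[of "{..<n}" \<phi>] phii by (simp add: eq)
  have "integral\<^sup>L (PiM {..<n} (\<lambda>_. P)) (\<lambda>x. a (x i) * a (x k)) = (\<Prod>m\<in>{..<n}. integral\<^sup>L P (\<phi> m))"
    using PS.product_integral_prod[of "{..<n}" \<phi>] phii by (simp add: eq)
  also have "\<dots> = (if i = k then integral\<^sup>L P (\<lambda>z. (a z)\<^sup>2) else 0)"
  proof (cases "i = k")
    case True then show ?thesis using ik by (simp add: phiint cong: if_cong)
  next
    case False then show ?thesis using ik
      by (simp add: phiint) (rule bexI[of _ i], auto)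
  qed
  finally show "integral\<^sup>L (PiM {..<n} (\<lambda>_. P)) (\<lambda>x. a (x i) * a (x k)) = (if i = k then integral\<^sup>L P (\<lambda>z. (a z)\<^sup>2) else 0)" .
qed

lemma grad_var:
  fixes P :: "'z measure" and g :: "'z \<Rightarrow> real^'n \<Rightarrow> real^'n" and n :: nat
  assumes P: "prob_space P" and gi: "integrable P (\<lambda>z. g z w)"
    and sq: "\<And>j. integrable P (\<lambda>z. (g z w $ j)\<^sup>2)"
    and A2: "(\<Sum>j\<in>UNIV. prob_space.variance P (\<lambda>z. g z w $ j)) \<le> v\<^sup>2"
    and v: "0 \<le> v" and n: "n \<ge> 1"
    and gF: "gF = integral\<^sup>L P (\<lambda>z. g z w)"
  shows "(\<integral>\<^sup>+ x. ennreal (norm (gF - sub_grad g n x w)) \<partial>PiM {..<n} (\<lambda>_. P)) \<le> ennreal (v / sqrt n)"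
proof -
  interpret P: prob_space P by fact
  define Q where "Q = PiM {..<n} (\<lambda>_. P)"
  interpret Q: prob_space Q unfolding Q_def by (rule prob_space_PiM) (rule P)
  define c where "c j = integral\<^sup>L P (\<lambda>z. g z w $ j)" for j
  have gFj: "gF $ j = c j" for j
    unfolding gF c_def by (rule integral_bounded_linear[OF bounded_linear_vec_nth gi, symmetric])
  have gji: "integrable P (\<lambda>z. g z w $ j)" for j
    by (rule integrable_bounded_linear[OF bounded_linear_vec_nth gi])
  define a where "a j z = g z w $ j - c j" for j z
  have ai: "integrable P (a j)" for j unfolding a_def using gji by auto
  have a0: "integral\<^sup>L P (a j) = 0" for j unfolding a_def using gji by (simp add: c_def P.prob_space)
  have a2i: "integrable P (\<lambda>z. (a j z)\<^sup>2)" for j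
  proof -
    have "(\<lambda>z. (a j z)\<^sup>2) = (\<lambda>z. (g z w $ j)\<^sup>2 - 2 * c j * g z w $ j + (c j)\<^sup>2)"
      by (auto simp: a_def power2_eq_square algebra_simps)
    then show ?thesis using sq gji by simp
  qed
  define V where "V j = integral\<^sup>L P (\<lambda>z. (a j z)\<^sup>2)" for j
  have V: "(\<Sum>j\<in>UNIV. V j) \<le> v\<^sup>2" using A2 by (simp add: V_def a_def c_def)
  define S where "S x = (\<Sum>j\<in>UNIV. (1 / (real n)\<^sup>2) * (\<Sum>i<n. \<Sum>k<n. a j (x i) * a j (x k)))" for x
  have normsq: "(norm (gF - sub_grad g n x w))\<^sup>2 = S x" for x
  proof -
    have comp: "(gF - sub_grad g n x w) $ j = - (1 / real n) * (\<Sum>i<n. a j (x i))" for j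
    proof -
      have h: "(\<Sum>i<n. g (x i) w $ j) = real n * c j + (\<Sum>i<n. a j (x i))"
        by (simp add: a_def sum_subtractf)
      show ?thesis using n
        by (simp add: sub_grad_def gFj sum_component h field_simps)
    qed
    have "(norm (gF - sub_grad g n x w))\<^sup>2 = (\<Sum>j\<in>UNIV. ((gF - sub_grad g n x w) $ j)\<^sup>2)"
      unfolding power2_norm_eq_inner inner_vec_def by (simp add: power2_eq_square)
    also have "\<dots> = S x"
      unfolding S_def comp
      by (simp add: power_mult_distrib power2_eq_square sum_product power_divide)
    finally show ?thesis .
  qed
  have termi: "integrable Q (\<lambda>x. a j (x i) * a j (x k))"
    and termv: "integral\<^sup>L Q (\<lambda>x. a j (x i) * a j (x k)) = (if i = k then V j else 0)"
    if "i < n" "k < n" for i k j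
    using prod_term[OF P ai a2i a0 that] unfolding Q_def V_def by auto
  have Si: "integrable Q S" unfolding S_def
    by (rule Bochner_Integration.integrable_sum, rule integrable_mult_right,
        rule Bochner_Integration.integrable_sum, rule Bochner_Integration.integrable_sum) (auto intro: termi)
  have Sv: "integral\<^sup>L Q S = (1 / real n) * (\<Sum>j\<in>UNIV. V j)"
  proof -
    have "integral\<^sup>L Q S = (\<Sum>j\<in>UNIV. (1 / (real n)\<^sup>2) * (\<Sum>i<n. \<Sum>k<n. (if i = k then V j else 0)))"
    proof -
      have i2: "integral\<^sup>L Q (\<lambda>x. \<Sum>i<n. \<Sum>k<n. a j (x i) * a j (x k)) = (\<Sum>i<n. \<Sum>k<n. (if i = k then V j else 0))" for j
      proof -
        have "integral\<^sup>L Q (\<lambda>x. \<Sum>i<n. \<Sum>k<n. a j (x i) * a j (x k)) = (\<Sum>i<n. integral\<^sup>L Q (\<lambda>x. \<Sum>k<n. a j (x i) * a j (x k)))"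
          by (rule Bochner_Integration.integral_sum) (auto intro!: termi)
        also have "\<dots> = (\<Sum>i<n. \<Sum>k<n. integral\<^sup>L Q (\<lambda>x. a j (x i) * a j (x k)))"
          by (rule sum.cong[OF refl], rule Bochner_Integration.integral_sum) (auto intro!: termi)
        also have "\<dots> = (\<Sum>i<n. \<Sum>k<n. (if i = k then V j else 0))"
          by (auto intro!: sum.cong simp: termv)
        finally show ?thesis .
      qed
      have "integral\<^sup>L Q S = (\<Sum>j\<in>UNIV. integral\<^sup>L Q (\<lambda>x. (1 / (real n)\<^sup>2) * (\<Sum>i<n. \<Sum>k<n. a j (x i) * a j (x k))))"
        unfolding S_def
        by (rule Bochner_Integration.integral_sum, rule integrable_mult_right,
            rule Bochner_Integration.integrable_sum, rule Bochner_Integration.integrable_sum) (auto intro: termi)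
      then show ?thesis by (simp only: integral_mult_right_zero i2)
    qed
    also have "\<dots> = (\<Sum>j\<in>UNIV. (1 / real n) * V j)"
      using n by (simp add: power2_eq_square)
    finally show ?thesis by (simp add: sum_distrib_left)
  qed
  define s where "s = v / sqrt n"
  have s0: "0 \<le> s" using v by (simp add: s_def)
  have ss: "s\<^sup>2 = v\<^sup>2 / real n" using n by (simp add: s_def power_divide)
  have ISv: "integral\<^sup>L Q S \<le> s\<^sup>2"
    using Sv V n ss by (simp add: divide_right_mono)
  have "(\<integral>\<^sup>+ x. ennreal (norm (gF - sub_grad g n x w)) \<partial>Q) \<le> ennreal s"
  proof (rule ennreal_le_epsilon)
    fix e :: real assume e: "0 < e"
    define t where "t = s + e"
    have t: "0 < t" using s0 e by (simp add: t_def)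
    have pw: "norm (gF - sub_grad g n x w) \<le> S x / (2 * t) + t / 2" for x
    proof -
      have "0 \<le> (norm (gF - sub_grad g n x w) - t)\<^sup>2" by simp
      then have "2 * t * norm (gF - sub_grad g n x w) \<le> (norm (gF - sub_grad g n x w))\<^sup>2 + t\<^sup>2"
        by (simp add: power2_eq_square algebra_simps)
      then show ?thesis using t normsq[of x] by (simp add: field_simps power2_eq_square)
    qed
    have "(\<integral>\<^sup>+ x. ennreal (norm (gF - sub_grad g n x w)) \<partial>Q) \<le> (\<integral>\<^sup>+ x. ennreal (S x / (2 * t) + t / 2) \<partial>Q)"
      by (rule nn_integral_mono) (use pw in \<open>auto intro: ennreal_leI\<close>)
    also have "\<dots> = ennreal (integral\<^sup>L Q (\<lambda>x. S x / (2 * t) + t / 2))"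
    proof (rule nn_integral_eq_integral)
      show "integrable Q (\<lambda>x. S x / (2 * t) + t / 2)" using Si by auto
      show "AE x in Q. 0 \<le> S x / (2 * t) + t / 2"
        using t normsq by (auto intro!: add_nonneg_nonneg divide_nonneg_pos simp flip: normsq)
    qed
    also have "\<dots> \<le> ennreal (s + e)"
    proof (rule ennreal_leI)
      have eqi: "integral\<^sup>L Q (\<lambda>x. S x / (2 * t) + t / 2) = integral\<^sup>L Q S / (2 * t) + t / 2"
        using Si by (simp add: Q.prob_space)
      have "integral\<^sup>L Q S / (2 * t) \<le> s\<^sup>2 / (2 * t)" using ISv t by (simp add: divide_right_mono)
      also have "\<dots> \<le> s / 2" using s0 t e by (simp add: field_simps power2_eq_square t_def mult_left_mono)
      finally have h: "integral\<^sup>L Q S / (2 * t) \<le> s / 2" .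
      have "\<And>X::real. X \<le> s / 2 \<Longrightarrow> X + t / 2 \<le> s + e" using e unfolding t_def by (simp add: field_simps)
      then show "integral\<^sup>L Q (\<lambda>x. S x / (2 * t) + t / 2) \<le> s + e" using h eqi by simp
    qed
    finally show "(\<integral>\<^sup>+ x. ennreal (norm (gF - sub_grad g n x w)) \<partial>Q) \<le> ennreal s + ennreal e"
      using s0 e by (simp add: ennreal_plus[symmetric] del: ennreal_plus)
  qed
  then show ?thesis by (simp add: Q_def s_def)
qed

lemma meas_test:
  fixes P :: "'z measure" and grad :: "'z \<Rightarrow> real^'n \<Rightarrow> real^'n" and hess :: "'z \<Rightarrow> real^'n \<Rightarrow> real^'n^'n"
  assumes gm: "(\<lambda>z. grad z w) \<in> borel_measurable P" and hm: "(\<lambda>z. hess z w) \<in> borel_measurable P"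
  shows "(\<lambda>x. norm (c - sub_grad grad n x w)) \<in> borel_measurable (PiM {..<n} (\<lambda>_. P))"
    "(\<lambda>x. norm ((sub_hess hess m x w - H) *v d)) \<in> borel_measurable (PiM {..<m} (\<lambda>_. P))"
proof -
  have [measurable]: "(\<lambda>x. grad (x i) w) \<in> borel_measurable (PiM {..<n} (\<lambda>_. P))" if "i < n" for i
    using measurable_compose[OF measurable_component_singleton[of i "{..<n}" "\<lambda>_. P"] gm] that by simp
  show "(\<lambda>x. norm (c - sub_grad grad n x w)) \<in> borel_measurable (PiM {..<n} (\<lambda>_. P))"
    unfolding sub_grad_def by measurable
  have [measurable]: "(\<lambda>x. hess (x i) w) \<in> borel_measurable (PiM {..<m} (\<lambda>_. P))" if "i < m" for i
    using measurable_compose[OF measurable_component_singleton[of i "{..<m}" "\<lambda>_. P"] hm] that by simp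
  have cont: "continuous_on UNIV (\<lambda>A::real^'n^'n. norm ((A - H) *v d))"
  proof -
    have "linear (\<lambda>A::real^'n^'n. A *v d)"
      by (rule linearI) (simp_all add: matrix_vector_mult_add_rdistrib flip: scaleR_matrix_vector_assoc)
    then have "continuous_on UNIV (\<lambda>A::real^'n^'n. A *v d)"
      by (simp add: linear_continuous_on linear_conv_bounded_linear)
    then have "continuous_on UNIV (\<lambda>A::real^'n^'n. (A - H) *v d)"
      using continuous_on_compose[of UNIV "\<lambda>A. A - H" "\<lambda>A. A *v d"]
      by (simp add: o_def continuous_on_diff continuous_on_id continuous_on_const continuous_on_subset)
    then show ?thesis by (intro continuous_intros)
  qed
  have "(\<lambda>x. sub_hess hess m x w) \<in> borel_measurable (PiM {..<m} (\<lambda>_. P))"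
    unfolding sub_hess_def by measurable
  then show "(\<lambda>x. norm ((sub_hess hess m x w - H) *v d)) \<in> borel_measurable (PiM {..<m} (\<lambda>_. P))"
    by (rule measurable_compose[OF _ borel_measurable_continuous_onI[OF cont], simplified])
qed

theorem lemma2p2:
  fixes P :: "'z measure"
    and f :: "real^'n \<Rightarrow> 'z \<Rightarrow> real"
    and grad :: "'z \<Rightarrow> real^'n \<Rightarrow> real^'n"
    and hess :: "'z \<Rightarrow> real^'n \<Rightarrow> real^'n^'n"
    and F :: "real^'n \<Rightarrow> real"
    and gradF :: "real^'n \<Rightarrow> real^'n"
    and hessF :: "real^'n \<Rightarrow> real^'n^'n"
    and mu_b L_b :: "nat \<Rightarrow> real"
    and mu_bar L_bar mu L v M :: real
    and wstar w :: "real^'n"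
    and nX nS :: nat
  assumes P: "prob_space P"
    (* smooth loss: per-sample gradient and Hessian *)
    and f_meas: "\<And>w. integrable P (f w)"
    and f_grad: "\<And>z w. z \<in> space P \<Longrightarrow> ((\<lambda>u. f u z) has_derivative (\<lambda>h. grad z w \<bullet> h)) (at w)"
    and f_hess: "\<And>z w. z \<in> space P \<Longrightarrow> (grad z has_derivative (\<lambda>h. hess z w *v h)) (at w)"
    and f_hess_cont: "\<And>z. z \<in> space P \<Longrightarrow> continuous_on UNIV (hess z)"
    (* population objective *)
    and F_def: "\<And>w. F w = (\<integral>z. f w z \<partial>P)"
    and F_grad: "\<And>w. (F has_derivative (\<lambda>h. gradF w \<bullet> h)) (at w)"
    and F_hess: "\<And>w. (gradF has_derivative (\<lambda>h. hessF w *v h)) (at w)"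
    and F_hess_cont: "continuous_on UNIV hessF"
    and grad_int: "\<And>w. integrable P (\<lambda>z. grad z w)"
    and grad_unbiased: "\<And>w. gradF w = (\<integral>z. grad z w \<partial>P)"
    and hess_int: "\<And>w. integrable P (\<lambda>z. hess z w)"
    and hess_unbiased: "\<And>w. hessF w = (\<integral>z. hess z w \<partial>P)"
    (* unique minimizer *)
    and wstar_min: "\<And>u. u \<noteq> wstar \<Longrightarrow> F wstar < F u"
    (* Assumption A1 *)
    and A1_sub: "\<And>\<beta> ss u. \<beta> \<ge> 1 \<Longrightarrow> (\<forall>i<\<beta>. ss i \<in> space P) \<Longrightarrow>
                   loewner_between (mu_b \<beta>) (sub_hess hess \<beta> ss u) (L_b \<beta>)"
    and A1_pos: "\<And>\<beta>. \<beta> \<ge> 1 \<Longrightarrow> 0 < mu_b \<beta> \<and> mu_b \<beta> \<le> L_b \<beta>"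
    and A1_bar: "\<And>\<beta>. \<beta> \<ge> 1 \<Longrightarrow> 0 < mu_bar \<and> mu_bar \<le> mu_b \<beta> \<and> L_b \<beta> \<le> L_bar"
    and A1_F: "\<And>u. loewner_between mu (hessF u) L"
    and A1_muL: "0 < mu" "mu \<le> L"
    (* Assumption A2 *)
    and A2_sq: "\<And>u j. integrable P (\<lambda>z. (grad z u $ j)\<^sup>2)"
    and A2: "\<And>u. (\<Sum>j\<in>UNIV. prob_space.variance P (\<lambda>z. grad z u $ j)) \<le> v\<^sup>2"
    and v_nonneg: "0 \<le> v"
    (* Assumption A3 *)
    and A3: "\<And>u y. onorm (\<lambda>x. (hessF u - hessF y) *v x) \<le> M * norm (u - y)"
    (* sample sizes *)
    and nX: "nX \<ge> 1" and nS: "nS \<ge> 1"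
  shows
   "(\<integral>\<^sup>+ p. ennreal (norm (sn_step grad hess nX nS (fst p) (snd p) w - wstar))
        \<partial>(PiM {..<nX} (\<lambda>_. P) \<Otimes>\<^sub>M PiM {..<nS} (\<lambda>_. P)))
    \<le> ennreal (1 / mu_b nS) *
       (ennreal (M / 2 * (norm (w - wstar))\<^sup>2)
        + (\<integral>\<^sup>+ p. ennreal (norm ((sub_hess hess nS (snd p) w - hessF w) *v (w - wstar)))
             \<partial>(PiM {..<nX} (\<lambda>_. P) \<Otimes>\<^sub>M PiM {..<nS} (\<lambda>_. P)))
        + ennreal (v / sqrt (real nX)))"
proof -
  interpret P: prob_space P by (rule P)
  define Mx where "Mx = PiM {..<nX} (\<lambda>_. P)"
  define Ms where "Ms = PiM {..<nS} (\<lambda>_. P)"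
  interpret Mx: prob_space Mx unfolding Mx_def by (rule prob_space_PiM) (rule P)
  interpret Ms: prob_space Ms unfolding Ms_def by (rule prob_space_PiM) (rule P)
  define MM where "MM = Mx \<Otimes>\<^sub>M Ms"
  interpret MM: prob_space MM unfolding MM_def by (rule prob_space_pair) unfold_locales
  define d where "d = w - wstar"
  define mu' where "mu' = mu_b nS"
  have mu'pos: "0 < mu'" using A1_pos[OF nS] by (simp add: mu'_def)
  define K where "K = M / 2 * (norm (w - wstar))\<^sup>2"
  define B where "B p = norm ((sub_hess hess nS (snd p) w - hessF w) *v (w - wstar))" for p :: "(nat \<Rightarrow> 'z) \<times> (nat \<Rightarrow> 'z)"
  define C where "C x = norm (gradF w - sub_grad grad nX x w)" for x
  have g0: "gradF wstar = 0"
  proof -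
    have "(\<lambda>h. gradF wstar \<bullet> h) = (\<lambda>h. 0)"
    proof (rule has_derivative_local_min[OF F_grad])
      show "eventually (\<lambda>y. F wstar \<le> F y) (at wstar)"
        by (rule always_eventually) (metis wstar_min order_refl less_imp_le)
    qed
    then have "gradF wstar \<bullet> gradF wstar = 0" by metis
    then show ?thesis by simp
  qed
  have R: "norm (hessF w *v d - gradF w) \<le> K"
  proof -
    have "norm (gradF wstar - gradF w - hessF w *v (wstar - w)) \<le> M / 2 * (norm (wstar - w))\<^sup>2"
      by (rule taylor_hess[OF F_hess A3])
    moreover have "gradF wstar - gradF w - hessF w *v (wstar - w) = hessF w *v d - gradF w"
      by (simp add: g0 d_def matrix_vector_mult_diff_distrib)
    moreover have "norm (wstar - w) = norm (w - wstar)" by (rule norm_minus_commute)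
    ultimately show ?thesis by (simp add: K_def)
  qed
  have K0: "0 \<le> K" using R norm_ge_zero order_trans by blast
  have pw: "norm (sn_step grad hess nX nS (fst p) (snd p) w - wstar) \<le> (1 / mu') * (K + B p + C (fst p))"
    if p: "p \<in> space MM" for p
  proof -
    have ss: "\<forall>i<nS. snd p i \<in> space P"
    proof -
      have "snd p \<in> space Ms" using p by (simp add: MM_def space_pair_measure mem_Times_iff)
      then show ?thesis by (simp add: Ms_def space_PiM PiE_iff)
    qed
    define H where "H = sub_hess hess nS (snd p) w"
    define g where "g = sub_grad grad nX (fst p) w"
    have L: "loewner_between mu' H (L_b nS)"
      unfolding H_def mu'_def by (rule A1_sub[OF nS ss])
    define u where "u = sn_step grad hess nX nS (fst p) (snd p) w - wstar"
    have u: "u = d - matrix_inv H *v g"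
      by (simp add: u_def sn_step_def H_def g_def d_def)
    have Hu: "H *v u = H *v d - g"
      using loew_inv(1)[OF L mu'pos, of g] by (simp add: u matrix_vector_mult_diff_distrib)
    also have "\<dots> = (H - hessF w) *v d + (hessF w *v d - gradF w) + (gradF w - g)"
      by (simp add: matrix_vector_mult_diff_rdistrib)
    finally have Hu2: "H *v u = (H - hessF w) *v d + (hessF w *v d - gradF w) + (gradF w - g)" .
    have "norm (H *v u) \<le> norm ((H - hessF w) *v d) + norm (hessF w *v d - gradF w) + norm (gradF w - g)"
      unfolding Hu2 using norm_triangle_ineq[of "(H - hessF w) *v d + (hessF w *v d - gradF w)" "gradF w - g"]
            norm_triangle_ineq[of "(H - hessF w) *v d" "hessF w *v d - gradF w"] by linarith
    also have "\<dots> \<le> B p + K + C (fst p)"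
      using R by (simp add: B_def C_def H_def g_def d_def)
    finally have "mu' * norm u \<le> K + B p + C (fst p)"
      using loew_norm[OF L, of u] by simp
    then show ?thesis using mu'pos by (simp add: u_def field_simps)
  qed
  have gm: "(\<lambda>z. grad z w) \<in> borel_measurable P" using grad_int[of w] by auto
  have hm: "(\<lambda>z. hess z w) \<in> borel_measurable P" using hess_int[of w] by auto
  have Cm: "C \<in> borel_measurable Mx"
    unfolding C_def Mx_def by (rule meas_test(1)[where grad=grad and hess=hess and w=w and P=P, OF gm hm])
  have Bm0: "(\<lambda>x. norm ((sub_hess hess nS x w - hessF w) *v (w - wstar))) \<in> borel_measurable Ms"
    unfolding Ms_def by (rule meas_test(2)[where grad=grad and hess=hess and w=w and P=P, OF gm hm])
  have Bm: "B \<in> borel_measurable MM"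
    unfolding B_def MM_def by (rule measurable_compose[OF measurable_snd Bm0])
  have Cm2: "(\<lambda>p. C (fst p)) \<in> borel_measurable MM"
    unfolding MM_def by (rule measurable_compose[OF measurable_fst Cm])
  have "(\<integral>\<^sup>+ p. ennreal (norm (sn_step grad hess nX nS (fst p) (snd p) w - wstar)) \<partial>MM)
      \<le> (\<integral>\<^sup>+ p. ennreal (1 / mu') * (ennreal K + ennreal (B p) + ennreal (C (fst p))) \<partial>MM)"
  proof (rule nn_integral_mono)
    fix p assume "p \<in> space MM"
    then have "ennreal (norm (sn_step grad hess nX nS (fst p) (snd p) w - wstar)) \<le> ennreal ((1 / mu') * (K + B p + C (fst p)))"
      by (intro ennreal_leI pw)
    also have "\<dots> = ennreal (1 / mu') * (ennreal K + ennreal (B p) + ennreal (C (fst p)))"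
    proof -
      have b: "0 \<le> B p" "0 \<le> C (fst p)" by (simp_all add: B_def C_def)
      have "ennreal ((1 / mu') * (K + B p + C (fst p))) = ennreal (1 / mu') * ennreal (K + B p + C (fst p))"
        using K0 mu'pos b by (intro ennreal_mult) auto
      also have "ennreal (K + B p + C (fst p)) = ennreal K + ennreal (B p) + ennreal (C (fst p))"
        using K0 b by (simp add: ennreal_plus[symmetric] del: ennreal_plus)
      finally show ?thesis .
    qed
    finally show "ennreal (norm (sn_step grad hess nX nS (fst p) (snd p) w - wstar)) \<le> \<dots>" .
  qed
  also have "\<dots> = ennreal (1 / mu') * (ennreal K + (\<integral>\<^sup>+ p. ennreal (B p) \<partial>MM) + (\<integral>\<^sup>+ p. ennreal (C (fst p)) \<partial>MM))"
  proof -
    note [measurable] = Bm Cm2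
    have "(\<integral>\<^sup>+ p. ennreal (1 / mu') * (ennreal K + ennreal (B p) + ennreal (C (fst p))) \<partial>MM)
        = ennreal (1 / mu') * (\<integral>\<^sup>+ p. (ennreal K + ennreal (B p) + ennreal (C (fst p))) \<partial>MM)"
      by (rule nn_integral_cmult) measurable
    also have "(\<integral>\<^sup>+ p. (ennreal K + ennreal (B p) + ennreal (C (fst p))) \<partial>MM)
        = (\<integral>\<^sup>+ p. (ennreal K + ennreal (B p)) \<partial>MM) + (\<integral>\<^sup>+ p. ennreal (C (fst p)) \<partial>MM)"
      by (rule nn_integral_add) measurable
    also have "(\<integral>\<^sup>+ p. (ennreal K + ennreal (B p)) \<partial>MM) = (\<integral>\<^sup>+ p. ennreal K \<partial>MM) + (\<integral>\<^sup>+ p. ennreal (B p) \<partial>MM)"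
      by (rule nn_integral_add) measurable
    also have "(\<integral>\<^sup>+ p. ennreal K \<partial>MM) = ennreal K" by (simp add: MM.emeasure_space_1)
    finally show ?thesis .
  qed
  also have "(\<integral>\<^sup>+ p. ennreal (C (fst p)) \<partial>MM) = (\<integral>\<^sup>+ x. ennreal (C x) \<partial>Mx)"
  proof -
    have "distr MM Mx fst = Mx" unfolding MM_def by (rule Ms.distr_pair_fst)
    then have "(\<integral>\<^sup>+ x. ennreal (C x) \<partial>Mx) = (\<integral>\<^sup>+ x. ennreal (C x) \<partial>distr MM Mx fst)" by simp
    also have "\<dots> = (\<integral>\<^sup>+ p. ennreal (C (fst p)) \<partial>MM)"
      by (rule nn_integral_distr) (use Cm in \<open>auto simp: MM_def\<close>)
    finally show ?thesis by simp
  qed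
  finally have fin0: "(\<integral>\<^sup>+ p. ennreal (norm (sn_step grad hess nX nS (fst p) (snd p) w - wstar)) \<partial>MM)
      \<le> ennreal (1 / mu') * (ennreal K + (\<integral>\<^sup>+ p. ennreal (B p) \<partial>MM) + (\<integral>\<^sup>+ x. ennreal (C x) \<partial>Mx))" .
  have Cb: "(\<integral>\<^sup>+ x. ennreal (C x) \<partial>Mx) \<le> ennreal (v / sqrt (real nX))"
    unfolding C_def Mx_def
    by (rule grad_var[OF P grad_int A2_sq A2 v_nonneg nX grad_unbiased])
  have fin: "(\<integral>\<^sup>+ p. ennreal (norm (sn_step grad hess nX nS (fst p) (snd p) w - wstar)) \<partial>MM)
      \<le> ennreal (1 / mu') * (ennreal K + (\<integral>\<^sup>+ p. ennreal (B p) \<partial>MM) + ennreal (v / sqrt (real nX)))"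
    by (rule order_trans[OF fin0]) (intro mult_left_mono add_left_mono Cb, auto)
  then show ?thesis
    by (simp add: MM_def Mx_def Ms_def mu'_def K_def B_def)
qed
end
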